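(* Let $n\ge 3$ and let $S$ be a double-$n$ string with diameter $d<n/2$, whose symbols are labeled $1,\dots,n$ in the order of their first occurrence in $S$. Then for each $1\le i\le d+1$, the number of symbols $j\in\{1,\dots,d+1\}\setminus\{i\}$ whose second occurrence lies at position-distance at most $d$ from the second occurrence of $i$ is at most $3d+i-n$.
   Context: A double-$n$ string is a string of length $2n$ over an alphabet of $n$ symbols in which each symbol appears exactly twice. Positions in the string are numbered $1,\dots,2n$; the position-distance between two entries is the absolute difference of their positions. The distance between two distinct symbols is the minimum position-distance between an occurrence of the first and an occurrence of the second. The diameter of a double-$n$ string is the maximum of the distance over all pairs of distinct symbols. *)

theory Defs
  imports Main
begin

text \<open>List index k (0-based) corresponds to position k+1;
position-distances are unaffected by this shift.\<close>

definition double_string :: "nat \<Rightarrow> nat list \<Rightarrow> bool" where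
  "double_string n S \<longleftrightarrow> length S = 2 * n \<and> set S \<subseteq> {1..n} \<and>
     (\<forall>a\<in>{1..n}. length (filter (\<lambda>x. x = a) S) = 2)"

definition pdist :: "nat \<Rightarrow> nat \<Rightarrow> nat" where
  "pdist i j = (if i \<le> j then j - i else i - j)"

definition sym_dist :: "nat list \<Rightarrow> nat \<Rightarrow> nat \<Rightarrow> nat" where
  "sym_dist S a b = Min {pdist i j | i j. i < length S \<and> j < length S \<and> S ! i = a \<and> S ! j = b}"

definition diameter :: "nat \<Rightarrow> nat list \<Rightarrow> nat" where
  "diameter n S = Max {sym_dist S a b | a b. a \<in> {1..n} \<and> b \<in> {1..n} \<and> a \<noteq> b}"

definition first_occ :: "nat list \<Rightarrow> nat \<Rightarrow> nat" where
  "first_occ S a = (LEAST k. k < length S \<and> S ! k = a)"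

definition second_occ :: "nat list \<Rightarrow> nat \<Rightarrow> nat" where
  "second_occ S a = (LEAST k. first_occ S a < k \<and> k < length S \<and> S ! k = a)"

definition first_occ_labelled :: "nat \<Rightarrow> nat list \<Rightarrow> bool" where
  "first_occ_labelled n S \<longleftrightarrow>
     (\<forall>a b. 1 \<le> a \<and> a < b \<and> b \<le> n \<longrightarrow> first_occ S a < first_occ S b)"

end

theory Submission
  imports Defs
begin

definition occ :: "nat list \<Rightarrow> nat \<Rightarrow> nat set" where
  "occ S a = {k. k < length S \<and> S ! k = a}"

lemma occ_finite[simp]: "finite (occ S a)"
  unfolding occ_def by auto

lemma sym_range: "double_string n S \<Longrightarrow> k < length S \<Longrightarrow> S ! k \<in> {1..n}"
  unfolding double_string_def using nth_mem by blast

lemma occ_card: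
  assumes "double_string n S" "a \<in> {1..n}"
  shows "card (occ S a) = 2"
proof -
  have "length (filter (\<lambda>x. x = a) S) = 2" using assms unfolding double_string_def by auto
  then show ?thesis unfolding occ_def length_filter_conv_card by simp
qed

lemma occ_struct:
  assumes "double_string n S" "a \<in> {1..n}"
  shows "first_occ S a < second_occ S a \<and> occ S a = {first_occ S a, second_occ S a}"
proof -
  obtain x y where xy: "x \<noteq> y" "occ S a = {x,y}" using occ_card[OF assms] card_2_iff by metis
  define u where "u = min x y"
  define v where "v = max x y"
  have uv: "u < v" "occ S a = {u,v}" using xy unfolding u_def v_def by (auto simp: min_def max_def)
  have uo: "u \<in> occ S a" "v \<in> occ S a" using uv by auto
  have f: "first_occ S a = u"
    unfolding first_occ_def
  proof (rule Least_equality)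
    show "u < length S \<and> S ! u = a" using uo unfolding occ_def by blast
    fix k assume "k < length S \<and> S ! k = a"
    then have "k \<in> occ S a" unfolding occ_def by simp
    then show "u \<le> k" using uv by auto
  qed
  have s: "second_occ S a = v"
    unfolding second_occ_def f
  proof (rule Least_equality)
    show "u < v \<and> v < length S \<and> S ! v = a" using uo uv unfolding occ_def by blast
    fix k assume "u < k \<and> k < length S \<and> S ! k = a"
    then have "k \<in> occ S a" "u < k" unfolding occ_def by simp_all
    then show "v \<le> k" using uv by auto
  qed
  show ?thesis using uv f s by simp
qed

lemma occ_sym: "k \<in> occ S a \<Longrightarrow> S ! k = a \<and> k < length S"
  unfolding occ_def by simp

lemma close_occ:
  assumes ds: "double_string n S" and ab: "a \<in> {1..n}" "b \<in> {1..n}" "a \<noteq> b"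
  shows "\<exists>p q. p \<in> occ S a \<and> q \<in> occ S b \<and> pdist p q \<le> diameter n S"
proof -
  let ?D = "{pdist i j | i j. i < length S \<and> j < length S \<and> S ! i = a \<and> S ! j = b}"
  have fin: "finite ?D"
  proof -
    have "?D \<subseteq> (\<lambda>(i,j). pdist i j) ` ({..<length S} \<times> {..<length S})" by force
    then show ?thesis by (rule finite_subset) auto
  qed
  have ne: "?D \<noteq> {}"
  proof -
    have "occ S a \<noteq> {}" "occ S b \<noteq> {}" using occ_card[OF ds] ab by (metis card.empty zero_neq_numeral)+
    then obtain i j where "i \<in> occ S a" "j \<in> occ S b" by blast
    then show ?thesis unfolding occ_def by blast
  qed
  have "sym_dist S a b \<in> ?D" unfolding sym_dist_def using Min_in[OF fin ne] .
  then obtain p q where pq: "p < length S" "q < length S" "S!p = a" "S!q=b" "pdist p q = sym_dist S a b"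
    by force
  have "sym_dist S a b \<le> diameter n S"
    unfolding diameter_def
    apply (rule Max_ge)
     apply (rule finite_subset[of _ "(\<lambda>(a,b). sym_dist S a b) ` ({1..n} \<times> {1..n})"])
    using ab by force+
  moreover have "p \<in> occ S a" "q \<in> occ S b" using pq unfolding occ_def by auto
  ultimately show ?thesis using pq(5) by metis
qed

lemma prefix_distinct:
  assumes ds: "double_string n S" and d: "d = diameter n S" and dn: "2*d < n"
    and pq: "p < q" "q \<le> d"
  shows "S ! p \<noteq> S ! q"
proof
  assume eq: "S ! p = S ! q"
  define a where "a = S ! p"
  have N: "length S = 2*n" using ds unfolding double_string_def by simp
  have qN: "q < length S" using pq dn N by simp
  have a_in: "a \<in> {1..n}" using sym_range[OF ds] qN pq unfolding a_def by simp
  have occa: "occ S a = {p,q}"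
  proof (rule sym[OF card_subset_eq])
    show "finite (occ S a)" by simp
    show "{p,q} \<subseteq> occ S a" using eq qN pq unfolding occ_def a_def by auto
    show "card {p,q} = card (occ S a)" using occ_card[OF ds a_in] pq by simp
  qed
  define R where "R = {2*d+1..<2*n}"
  have inj: "inj_on (\<lambda>k. S!k) R"
  proof (rule inj_onI)
    fix x y assume xR: "x\<in>R" and yR: "y\<in>R" and xy: "S!x = S!y"
    show "x = y"
    proof (rule ccontr)
      assume ne: "x \<noteq> y"
      define b where "b = S ! x"
      have xN: "x < length S" "y < length S" using xR yR N unfolding R_def by auto
      have b_in: "b \<in> {1..n}" using sym_range[OF ds] xN unfolding b_def by simp
      have occb: "occ S b = {x,y}"
      proof (rule sym[OF card_subset_eq])
        show "finite (occ S b)" by simp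
        show "{x,y} \<subseteq> occ S b" using xy xN unfolding occ_def b_def by auto
        show "card {x,y} = card (occ S b)" using occ_card[OF ds b_in] ne by simp
      qed
      have "b \<noteq> a"
      proof
        assume "b = a"
        then have "x \<in> {p,q}" using occa occb by auto
        then show False using xR pq unfolding R_def by auto
      qed
      then obtain p' q' where "p' \<in> occ S a" "q' \<in> occ S b" "pdist p' q' \<le> d"
        using close_occ[OF ds a_in b_in] d by metis
      then show False using occa occb xR yR pq unfolding R_def pdist_def by (auto split: if_splits)
    qed
  qed
  have img: "(\<lambda>k. S!k) ` R \<subseteq> {1..n} - {a}"
  proof
    fix z assume "z \<in> (\<lambda>k. S!k) ` R"
    then obtain k where k: "k \<in> R" "z = S!k" by blast
    have kN: "k < length S" using k N unfolding R_def by auto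
    have "z \<in> {1..n}" using sym_range[OF ds kN] k by simp
    moreover have "z \<noteq> a"
    proof
      assume "z = a"
      then have "k \<in> occ S a" using k kN unfolding occ_def by simp
      then show False using occa k pq unfolding R_def by auto
    qed
    ultimately show "z \<in> {1..n} - {a}" by simp
  qed
  have "card R \<le> card ({1..n} - {a})" by (rule card_inj_on_le[OF inj img]) simp
  then show False using a_in dn unfolding R_def by simp
qed

lemma first_at_prefix:
  assumes ds: "double_string n S" and d: "d = diameter n S" and dn: "2*d < n" and pd: "p \<le> d"
  shows "S ! p \<in> {1..n} \<and> first_occ S (S ! p) = p"
proof -
  have N: "length S = 2*n" using ds unfolding double_string_def by simp
  have pN: "p < length S" using pd dn N by simp
  define a where "a = S ! p"
  have a_in: "a \<in> {1..n}" using sym_range[OF ds pN] unfolding a_def .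
  have st: "first_occ S a < second_occ S a" "occ S a = {first_occ S a, second_occ S a}"
    using occ_struct[OF ds a_in] by auto
  have "p \<in> occ S a" using pN unfolding occ_def a_def by simp
  then have "p = first_occ S a \<or> p = second_occ S a" using st by auto
  moreover have "p \<noteq> second_occ S a"
  proof
    assume ps: "p = second_occ S a"
    have "first_occ S a \<in> occ S a" using st by auto
    then have "S ! first_occ S a = S ! p" using occ_sym unfolding a_def by metis
    then show False using prefix_distinct[OF ds d dn, of "first_occ S a" p] st ps pd by simp
  qed
  ultimately show ?thesis using a_in unfolding a_def by auto
qed

lemma first_small:
  assumes ds: "double_string n S" and lab: "first_occ_labelled n S" and d: "d = diameter n S"
    and dn: "2*d < n" and j: "1 \<le> j" "j \<le> d + 1"
  shows "first_occ S j \<le> j - 1"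
proof (rule ccontr)
  assume c: "\<not> first_occ S j \<le> j - 1"
  have inj: "inj_on (\<lambda>p. S!p) {0..<j}"
  proof (rule inj_onI)
    fix x y assume "x \<in> {0..<j}" "y \<in> {0..<j}" "S!x = S!y"
    then show "x = y" using prefix_distinct[OF ds d dn, of x y] prefix_distinct[OF ds d dn, of y x] j
      by (metis atLeastLessThan_iff le_simps(2) linorder_neqE_nat order_less_le_trans less_Suc_eq_le add.commute plus_1_eq_Suc)
  qed
  have img: "(\<lambda>p. S!p) ` {0..<j} \<subseteq> {1..<j}"
  proof
    fix z assume "z \<in> (\<lambda>p. S!p) ` {0..<j}"
    then obtain p where p: "p < j" "z = S!p" by auto
    have fp: "S ! p \<in> {1..n}" "first_occ S (S!p) = p"
      using first_at_prefix[OF ds d dn, of p] p j by auto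
    have "S ! p < j"
    proof (rule ccontr)
      assume "\<not> S ! p < j"
      then have "S ! p = j \<or> j < S ! p" by auto
      then show False
      proof
        assume "S ! p = j" then show False using fp c p by simp
      next
        assume "j < S ! p"
        then have "first_occ S j < first_occ S (S!p)"
          apply (intro lab[unfolded first_occ_labelled_def, rule_format])
          using fp j by auto
        then show False using fp c p by simp
      qed
    qed
    then show "z \<in> {1..<j}" using fp p by auto
  qed
  have "card {0..<j} \<le> card {1..<j}" by (rule card_inj_on_le[OF inj img]) simp
  then show False using j by simp
qed

theorem corollary3p5:
  fixes n d i :: nat and S :: "nat list"
  assumes "n \<ge> 3"
    and "double_string n S"
    and "first_occ_labelled n S"
    and "d = diameter n S"
    and "2 * d < n"
    and "1 \<le> i" and "i \<le> d + 1"
  shows "int (card {j \<in> {1..d+1} - {i}. pdist (second_occ S j) (second_occ S i) \<le> d})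
           \<le> 3 * int d + int i - int n"
proof -
  note ds = assms(2) and lab = assms(3) and dd = assms(4) and dn = assms(5)
  define f where "f = first_occ S i"
  define s where "s = second_occ S i"
  have i_in: "i \<in> {1..n}" using assms by auto
  have fs: "f < s" "occ S i = {f,s}" using occ_struct[OF ds i_in] unfolding f_def s_def by auto
  have fi: "f \<le> i - 1" using first_small[OF ds lab dd dn] assms unfolding f_def by simp
  define A where "A = {0..i-1+d}"
  define B where "B = {s-d..s+d}"
  define U where "U = (A \<union> B) - {f,s}"
  have cardAB: "card (A \<union> B) \<le> i + 3*d + 1"
  proof -
    have "card (A \<union> B) \<le> card A + card B" by (rule card_Un_le)
    moreover have "card A = i + d" using assms unfolding A_def by simp
    moreover have "card B \<le> 2*d+1" unfolding B_def by simp
    ultimately show ?thesis by simp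
  qed
  have cardU: "card U \<le> 3*d + i - 1"
  proof -
    have "f \<in> A" using fi unfolding A_def by simp
    moreover have "s \<in> B" unfolding B_def by simp
    ultimately have sub: "{f,s} \<subseteq> A \<union> B" by auto
    have "card U = card (A \<union> B) - card {f,s}" unfolding U_def
      by (rule card_Diff_subset) (simp, rule sub)
    then show ?thesis using cardAB fs by simp
  qed
  have finU: "finite U" unfolding U_def A_def B_def by simp
  define K where "K = {1..n} - {i}"
  define J where "J = {j \<in> {1..d+1} - {i}. pdist (second_occ S j) (second_occ S i) \<le> d}"
  have JK: "J \<subseteq> K" using dn unfolding J_def K_def by auto
  have finK: "finite K" unfolding K_def by simp
  have ne: "card (occ S b \<inter> U) \<ge> 1" if b: "b \<in> K" for b
  proof -
    have b_in: "b \<in> {1..n}" "b \<noteq> i" using b unfolding K_def by auto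
    obtain p q where pq: "p \<in> occ S i" "q \<in> occ S b" "pdist p q \<le> d"
      using close_occ[OF ds i_in b_in(1)] b_in dd by metis
    have qb: "S ! q = b" using pq occ_sym by metis
    have fsi: "S ! f = i" "S ! s = i" using fs occ_sym by auto
    have "q \<notin> {f,s}" using qb fsi b_in by auto
    moreover have "q \<in> A \<union> B"
    proof -
      have "p = f \<or> p = s" using pq fs by auto
      then show ?thesis
      proof
        assume "p = f"
        then have "q \<le> f + d" using pq unfolding pdist_def by (auto split: if_splits)
        then show ?thesis using fi unfolding A_def by auto
      next
        assume "p = s"
        then have "s - d \<le> q \<and> q \<le> s + d" using pq unfolding pdist_def by (auto split: if_splits)
        then show ?thesis unfolding B_def by auto
      qed
    qed
    ultimately have "q \<in> occ S b \<inter> U" using pq unfolding U_def by auto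
    then have "occ S b \<inter> U \<noteq> {}" by blast
    then show ?thesis by (simp add: Suc_leI card_gt_0_iff)
  qed
  have two: "card (occ S j \<inter> U) \<ge> 2" if jJ: "j \<in> J" for j
  proof -
    have j: "1 \<le> j" "j \<le> d + 1" "j \<noteq> i" "pdist (second_occ S j) s \<le> d"
      using jJ unfolding J_def s_def by auto
    have j_in: "j \<in> {1..n}" using j dn by auto
    define fj where "fj = first_occ S j"
    define sj where "sj = second_occ S j"
    have fsj: "fj < sj" "occ S j = {fj,sj}" using occ_struct[OF ds j_in] unfolding fj_def sj_def by auto
    have fjs: "fj \<le> j - 1" using first_small[OF ds lab dd dn j(1) j(2)] unfolding fj_def .
    have fsi: "S ! f = i" "S ! s = i" using fs occ_sym by auto
    have fsj2: "S ! fj = j" "S ! sj = j" using fsj occ_sym by auto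
    have "fj \<in> A" using fjs j unfolding A_def by auto
    moreover have "sj \<in> B" using j(4) unfolding B_def pdist_def sj_def by (auto split: if_splits)
    moreover have "fj \<notin> {f,s}" "sj \<notin> {f,s}" using fsi fsj2 j(3) by auto
    ultimately have "{fj,sj} \<subseteq> occ S j \<inter> U" using fsj unfolding U_def by auto
    then have "card {fj,sj} \<le> card (occ S j \<inter> U)" by (rule card_mono[rotated]) simp
    then show ?thesis using fsj by simp
  qed
  have "card (\<Union>b\<in>K. occ S b \<inter> U) = (\<Sum>b\<in>K. card (occ S b \<inter> U))"
    by (rule card_UN_disjoint) (auto simp: finK occ_def)
  moreover have "card (\<Union>b\<in>K. occ S b \<inter> U) \<le> card U"
    by (rule card_mono) (auto simp: finU)
  moreover have "(\<Sum>b\<in>K. card (occ S b \<inter> U)) \<ge> card K + card J"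
  proof -
    have "(\<Sum>b\<in>K. card (occ S b \<inter> U)) = (\<Sum>b\<in>K - J. card (occ S b \<inter> U)) + (\<Sum>b\<in>J. card (occ S b \<inter> U))"
      by (rule sum.subset_diff[OF JK finK])
    moreover have "(\<Sum>b\<in>K - J. card (occ S b \<inter> U)) \<ge> (\<Sum>b\<in>K - J. 1)"
      by (rule sum_mono) (use ne in auto)
    moreover have "(\<Sum>b\<in>J. card (occ S b \<inter> U)) \<ge> (\<Sum>b\<in>J. 2)"
      by (rule sum_mono) (use two in auto)
    moreover have "card (K - J) = card K - card J" using JK finK by (simp add: card_Diff_subset finite_subset)
    moreover have "card J \<le> card K" using JK finK by (simp add: card_mono)
    ultimately show ?thesis by simp
  qed
  moreover have "card K = n - 1" using i_in unfolding K_def by simp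
  ultimately have "card J + (n - 1) \<le> 3*d + i - 1" using cardU by linarith
  then show ?thesis unfolding J_def using assms by linarith
qed

end
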